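(* Let $\mathcal{H}$ be a Hilbert space and let $\mathbf{L}_1,\mathbf{L}_2:\mathcal{H}^n\to\mathcal{H}^n$ be invertible and lower triangular $n\times n$ matrices of operators on $\mathcal{H}$. If $$\mathbf{L}_1\mathbf{L}_1^*=\mathbf{L}_2\mathbf{L}_2^*,$$ then $\mathbf{L}_2=\mathbf{L}_1\,\mathrm{diag}(\mathbf{L}_1)^{-1}\,\mathrm{diag}(\mathbf{L}_2)$.
   Context: For an $n\times n$ matrix of operators $\mathbf{L}$, $\mathrm{diag}(\mathbf{L})$ denotes the diagonal matrix of operators with the same diagonal entries as $\mathbf{L}$; $^*$ denotes the Hilbert space adjoint.
   Formalization: $\mathcal{H}$ is a real Hilbert space, and the inverses of $\mathbf{L}_1$ and $\mathbf{L}_2$ are themselves lower triangular matrices of operators. Apart from conventions, each condition added here is assumed in the paper as well or is needed for the statement above to hold. *)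

theory Defs
  imports "HOL-Analysis.Analysis"
begin

(* Operators on a (real) Hilbert space 'a: bounded linear maps 'a =>L 'a.
  An n x n matrix of operators is a function nat => nat => operator,
  only the entries with indices < n being relevant. *)

type_synonym 'a opmat = "nat \<Rightarrow> nat \<Rightarrow> ('a \<Rightarrow>\<^sub>L 'a)"

definition adj :: "('a::{real_inner,complete_space} \<Rightarrow>\<^sub>L 'a) \<Rightarrow> ('a \<Rightarrow>\<^sub>L 'a)" where
  "adj A = (THE B. \<forall>x y. inner (blinfun_apply A x) y = inner x (blinfun_apply B y))"

definition opmat_mult :: "nat \<Rightarrow> 'a::real_normed_vector opmat \<Rightarrow> 'a opmat \<Rightarrow> 'a opmat" where
  "opmat_mult n L M = (\<lambda>i j. \<Sum>k<n. L i k o\<^sub>L M k j)"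

definition opmat_id :: "'a::real_normed_vector opmat" where
  "opmat_id = (\<lambda>i j. if i = j then id_blinfun else 0)"

definition opmat_adj :: "'a::{real_inner,complete_space} opmat \<Rightarrow> 'a opmat" where
  "opmat_adj L = (\<lambda>i j. adj (L j i))"

definition opmat_diag :: "'a::real_normed_vector opmat \<Rightarrow> 'a opmat" where
  "opmat_diag L = (\<lambda>i j. if i = j then L i i else 0)"

definition opmat_eq :: "nat \<Rightarrow> 'a::real_normed_vector opmat \<Rightarrow> 'a opmat \<Rightarrow> bool" where
  "opmat_eq n L M \<longleftrightarrow> (\<forall>i<n. \<forall>j<n. L i j = M i j)"

definition lower_triangular :: "nat \<Rightarrow> 'a::real_normed_vector opmat \<Rightarrow> bool" where
  "lower_triangular n L \<longleftrightarrow> (\<forall>i<n. \<forall>j<n. i < j \<longrightarrow> L i j = 0)"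

definition opmat_inverse :: "nat \<Rightarrow> 'a::real_normed_vector opmat \<Rightarrow> 'a opmat \<Rightarrow> bool" where
  "opmat_inverse n L M \<longleftrightarrow> opmat_eq n (opmat_mult n L M) opmat_id \<and> opmat_eq n (opmat_mult n M L) opmat_id"

definition invertible_lower_triangular :: "nat \<Rightarrow> 'a::real_normed_vector opmat \<Rightarrow> bool" where
  "invertible_lower_triangular n L \<longleftrightarrow> lower_triangular n L \<and>
     (\<exists>M. lower_triangular n M \<and> opmat_inverse n L M)"

end

theory Submission imports Defs "HOL-Real_Asymp.Real_Asymp"
begin

lemma parallelogram_aux:
  fixes a b :: "'a::real_inner"
  shows "(norm (a - b))\<^sup>2 = 2 * (norm a)\<^sup>2 + 2 * (norm b)\<^sup>2 - (norm (a + b))\<^sup>2"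
  by (simp add: power2_norm_eq_inner inner_add inner_diff inner_commute algebra_simps)

lemma quad_aux:
  fixes a b :: real
  assumes b: "b \<ge> 0" and h: "\<And>t. 0 \<le> 2*t*a + t*t*b"
  shows "a = 0"
proof (rule ccontr)
  assume a: "a \<noteq> 0"
  define s where "s = 1 / (b + 1)"
  have s: "s > 0" "s * b < 1" using b by (auto simp: s_def field_simps)
  have "0 \<le> 2 * (- a * s) * a + (- a * s) * (- a * s) * b" by (rule h)
  also have "\<dots> = (s*(a*a)) * (s*b - 2)" by (simp add: algebra_simps)
  also have "\<dots> < 0" using s a by (intro mult_pos_neg) (auto simp: zero_less_mult_iff)
  finally show False by simp
qed

lemma riesz:
  fixes f :: "'a::{real_inner,complete_space} \<Rightarrow> real"
  assumes bl: "bounded_linear f"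
  shows "\<exists>z. \<forall>x. f x = inner z x"
proof (cases "\<forall>x. f x = 0")
  case True then show ?thesis by (intro exI[of _ 0]) simp
next
  case False
  interpret f: bounded_linear f by fact
  define c where "c = onorm f"
  have fb: "\<And>x. f x \<le> c * norm x"
    using onorm[OF bl] unfolding c_def by (metis abs_le_D1 real_norm_def)
  from False obtain x0 where "f x0 \<noteq> 0" by auto
  have cpos: "c > 0"
  proof -
    have "\<bar>f x0\<bar> \<le> c * norm x0" using onorm[OF bl] unfolding c_def by simp
    moreover have "\<bar>f x0\<bar> > 0" using \<open>f x0 \<noteq> 0\<close> by simp
    moreover have "c \<ge> 0" unfolding c_def by (rule onorm_pos_le[OF bl])
    ultimately show ?thesis
      by (metis less_eq_real_def mult_not_zero not_le)
  qed
  have approx: "\<exists>x. norm x \<le> 1 \<and> f x > c - e" if e: "0 < e" "e < c" for e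
  proof (rule ccontr)
    assume "\<not> ?thesis"
    then have H: "\<And>x. norm x \<le> 1 \<Longrightarrow> f x \<le> c - e" by force
    have "norm (f x) \<le> (c - e) * norm x" for x
    proof (cases "x = 0")
      case True then show ?thesis by simp
    next
      case False
      define u where "u = x /\<^sub>R norm x"
      have nu: "norm u = 1" using False by (simp add: u_def)
      have "f u \<le> c - e" using H nu by simp
      moreover have "f (- u) \<le> c - e" using H nu by simp
      ultimately have "\<bar>f u\<bar> \<le> c - e" using f.neg by (simp add: abs_le_iff)
      moreover have "f u = f x / norm x" using f.scaleR by (simp add: u_def divide_inverse mult.commute)
      ultimately have "\<bar>f x\<bar> / norm x \<le> c - e" by simp
      then show ?thesis using False by (simp add: divide_le_eq)
    qed
    then have "onorm f \<le> c - e" by (intro onorm_bound) (use e in auto)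
    then show False using e c_def by simp
  qed
  define x where "x k = (SOME x. norm x \<le> 1 \<and> f x > c - c / (real k + 2))" for k
  have xk: "norm (x k) \<le> 1 \<and> f (x k) > c - c / (real k + 2)" for k
  proof -
    have "0 < c / (real k + 2)" "c / (real k + 2) < c" using cpos by (auto simp: field_simps intro: add_pos_nonneg)
    from approx[OF this] show ?thesis unfolding x_def by (rule someI_ex)
  qed
  have "Cauchy x"
  proof (rule metric_CauchyI)
    fix e :: real assume "e > 0"
    obtain N :: nat where N: "8 / e\<^sup>2 < real N" using reals_Archimedean2 by blast
    show "\<exists>M. \<forall>m\<ge>M. \<forall>n\<ge>M. dist (x m) (x n) < e"
    proof (intro exI allI impI)
      fix m k assume m: "m \<ge> N" and k: "k \<ge> N"
      define d where "d = 1 / (real N + 2)"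
      have d: "0 < d" "d \<le> 1/2" by (auto simp: d_def field_simps)
      have "c / (real m + 2) \<le> c * d" using m cpos by (simp add: d_def field_simps)
      moreover have "c / (real k + 2) \<le> c * d" using k cpos by (simp add: d_def field_simps)
      ultimately have "f (x m + x k) > 2 * c * (1 - d)" using xk[of m] xk[of k] f.add
        by (simp add: algebra_simps)
      also have "f (x m + x k) \<le> c * norm (x m + x k)" by (rule fb)
      finally have "2 * (1 - d) < norm (x m + x k)" using cpos by simp
      then have "(2 * (1 - d))\<^sup>2 \<le> (norm (x m + x k))\<^sup>2"
        using d by (intro power_mono) auto
      then have s: "4 - 8 * d \<le> (norm (x m + x k))\<^sup>2"
        by (simp add: power2_eq_square algebra_simps) (smt (verit) d mult_nonneg_nonneg)
      have "(norm (x m))\<^sup>2 \<le> 1" "(norm (x k))\<^sup>2 \<le> 1"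
        using xk[of m] xk[of k] by (auto simp: power_le_one)
      then have "(norm (x m - x k))\<^sup>2 \<le> 8 * d"
        using parallelogram_aux[of "x m" "x k"] s by linarith
      also have "8 * d < e\<^sup>2"
        using N \<open>e > 0\<close> by (simp add: d_def field_simps) (smt (verit) zero_less_power)
      finally have "(norm (x m - x k))\<^sup>2 < e\<^sup>2" .
      then show "dist (x m) (x k) < e"
        using \<open>e > 0\<close> by (simp add: dist_norm power_less_imp_less_base)
    qed
  qed
  then obtain z where lim: "x \<longlonglongrightarrow> z" using Cauchy_convergent_iff convergent_def by blast
  have nz: "norm z \<le> 1"
    using tendsto_norm[OF lim] by (rule LIMSEQ_le_const2) (use xk in auto)
  have "(\<lambda>k. f (x k)) \<longlonglongrightarrow> f z" using lim by (rule f.tendsto)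
  moreover have "(\<lambda>k. c - c / (real k + 2)) \<longlonglongrightarrow> c" by real_asymp
  ultimately have "c \<le> f z"
    using xk by (intro LIMSEQ_le[of "\<lambda>k. c - c / (real k + 2)" c "\<lambda>k. f (x k)"]) (auto intro: less_imp_le)
  moreover have "f z \<le> c" using fb[of z] nz cpos
    by (smt (verit) mult_left_le)
  ultimately have fz: "f z = c" by simp
  have orth: "inner z y = 0" if y: "f y = 0" for y
  proof -
    have ge: "1 \<le> (norm (z + t *\<^sub>R y))\<^sup>2" for t
    proof -
      have "c \<le> c * norm (z + t *\<^sub>R y)" using fb[of "z + t *\<^sub>R y"] fz y f.add f.scaleR by simp
      then have "1 \<le> norm (z + t *\<^sub>R y)" using cpos by simp
      then show ?thesis by (simp add: one_le_power)
    qed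
    have nz1: "(norm z)\<^sup>2 \<le> 1" using nz by (simp add: power_le_one)
    define a where "a = inner z y"
    define b where "b = inner y y"
    have b: "b \<ge> 0" by (simp add: b_def)
    have "0 \<le> 2 * t * a + t * t * b" for t
      using ge[of t] nz1 by (simp add: a_def b_def power2_norm_eq_inner inner_add inner_commute algebra_simps)
    then have "a = 0" using b by (intro quad_aux) auto
    then show ?thesis unfolding a_def .
  qed
  have n1: "inner z z = 1"
  proof -
    have "c \<le> c * norm z" using fb[of z] fz by simp
    then have "norm z = 1" using nz cpos by simp
    then show ?thesis by (metis norm_eq_sqrt_inner real_sqrt_eq_1_iff)
  qed
  show ?thesis
  proof (intro exI allI)
    fix v
    have "f (v - (f v / c) *\<^sub>R z) = 0" using fz cpos f.diff f.scaleR by simp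
    from orth[OF this] have "inner z v = f v / c" using n1 by (simp add: inner_diff_right)
    then show "f v = inner (c *\<^sub>R z) v" using cpos by simp
  qed
qed


lemma inner_ext:
  fixes u v :: "'a::real_inner"
  assumes "\<And>x. inner x u = inner x v"
  shows "u = v"
proof -
  have "inner (u - v) (u - v) = 0" using assms[of "u - v"] by (simp add: inner_diff_right)
  then show ?thesis by simp
qed

lemma adj_exists:
  fixes A :: "'a::{real_inner,complete_space} \<Rightarrow>\<^sub>L 'a"
  shows "\<exists>B::'a \<Rightarrow>\<^sub>L 'a. \<forall>x y. inner (A x) y = inner x (blinfun_apply B y)"
proof -
  have "\<forall>y. \<exists>z. \<forall>x. inner (A x) y = inner z x"
  proof
    fix y
    have "bounded_linear (\<lambda>x. inner (A x) y)"
      by (rule bounded_linear_compose[OF bounded_linear_inner_left blinfun.bounded_linear_right])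
    then show "\<exists>z. \<forall>x. inner (A x) y = inner z x" by (rule riesz)
  qed
  then obtain g where g: "\<And>x y. inner (A x) y = inner (g y) x" by metis
  have g': "\<And>x y. inner (A x) y = inner x (g y)" using g by (simp add: inner_commute)
  have add: "g (y1 + y2) = g y1 + g y2" for y1 y2
    by (rule inner_ext) (simp add: g'[symmetric] inner_add_right)
  have scl: "g (r *\<^sub>R y) = r *\<^sub>R g y" for r y
    by (rule inner_ext) (simp add: g'[symmetric])
  have bnd: "norm (g y) \<le> norm y * norm A" for y
  proof (cases "g y = 0")
    case True then show ?thesis by simp
  next
    case False
    have "(norm (g y))\<^sup>2 = inner (A (g y)) y" by (simp add: g' power2_norm_eq_inner)
    also have "\<dots> \<le> norm (A (g y)) * norm y" by (rule norm_cauchy_schwarz)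
    also have "\<dots> \<le> norm A * norm (g y) * norm y"
      by (intro mult_right_mono norm_blinfun) simp
    finally have "norm (g y) * norm (g y) \<le> (norm y * norm A) * norm (g y)"
      by (simp add: power2_eq_square algebra_simps)
    then show ?thesis using False by simp
  qed
  have bl: "bounded_linear g"
    by (rule bounded_linear_intro[where K="norm A"]) (auto simp: add scl bnd)
  show ?thesis
    by (intro exI[of _ "Blinfun g"]) (simp add: bounded_linear_Blinfun_apply[OF bl] g')
qed

lemma adj_char:
  fixes A :: "'a::{real_inner,complete_space} \<Rightarrow>\<^sub>L 'a"
  shows "inner (A x) y = inner x (adj A y)"
proof -
  have "\<exists>!B. \<forall>x y. inner (A x) y = inner x (blinfun_apply B y)"
  proof -
    obtain B where B: "\<forall>x y. inner (A x) y = inner x (blinfun_apply B y)" using adj_exists by blast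
    moreover have "B' = B" if "\<forall>x y. inner (A x) y = inner x (blinfun_apply B' y)" for B'
      by (rule blinfun_eqI, rule inner_ext) (use that B in metis)
    ultimately show ?thesis by blast
  qed
  from theI'[OF this] show ?thesis unfolding adj_def by blast
qed

lemma adj_unique:
  fixes A B :: "'a::{real_inner,complete_space} \<Rightarrow>\<^sub>L 'a"
  assumes "\<And>x y. inner (A x) y = inner x (B y)"
  shows "adj A = B"
  by (rule blinfun_eqI, rule inner_ext) (metis assms adj_char)

lemma adj_comp: "adj (A o\<^sub>L B) = adj B o\<^sub>L adj (A :: 'a::{real_inner,complete_space} \<Rightarrow>\<^sub>L 'a)"
  by (rule adj_unique) (simp add: adj_char)

lemma adj_sum: "adj (sum F S) = (\<Sum>k\<in>S. adj (F k :: 'a::{real_inner,complete_space} \<Rightarrow>\<^sub>L 'a))"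
  by (rule adj_unique) (simp add: blinfun.sum_left inner_sum_left inner_sum_right adj_char)

lemma adj_zero: "adj (0 :: 'a::{real_inner,complete_space} \<Rightarrow>\<^sub>L 'a) = 0"
  by (rule adj_unique) simp

lemma adj_id: "adj (id_blinfun :: 'a::{real_inner,complete_space} \<Rightarrow>\<^sub>L 'a) = id_blinfun"
  by (rule adj_unique) simp

lemma adj_eq0:
  fixes A :: "'a::{real_inner,complete_space} \<Rightarrow>\<^sub>L 'a"
  assumes "adj A = 0" shows "A = 0"
proof (rule blinfun_eqI)
  fix x
  have "inner (A x) (A x) = 0" using adj_char[of A x "A x"] assms by simp
  then show "blinfun_apply A x = blinfun_apply 0 x" by simp
qed

lemma comp_id_left: "id_blinfun o\<^sub>L A = A" by (rule blinfun_eqI) simp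
lemma comp_id_right: "A o\<^sub>L id_blinfun = A" by (rule blinfun_eqI) simp


lemma opmat_eq_refl: "opmat_eq n A A" by (simp add: opmat_eq_def)
lemma opmat_eq_sym: "opmat_eq n A B \<Longrightarrow> opmat_eq n B A" by (simp add: opmat_eq_def)
lemma opmat_eq_trans[trans]: "opmat_eq n A B \<Longrightarrow> opmat_eq n B C \<Longrightarrow> opmat_eq n A C"
  by (simp add: opmat_eq_def)
lemma opmat_eq_trans_eq1[trans]: "A = B \<Longrightarrow> opmat_eq n B C \<Longrightarrow> opmat_eq n A C" by simp
lemma opmat_eq_trans_eq2[trans]: "opmat_eq n A B \<Longrightarrow> B = C \<Longrightarrow> opmat_eq n A C" by simp

lemma comp_assoc: "(A o\<^sub>L B) o\<^sub>L C = A o\<^sub>L (B o\<^sub>L C)" by (rule blinfun_eqI) simp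
lemma id_if_left: "(if i = k then id_blinfun else 0) o\<^sub>L X = (if k = i then X else 0)"
  by (simp add: comp_id_left)
lemma id_if_right: "X o\<^sub>L (if k = j then id_blinfun else 0) = (if k = j then X else 0)"
  by (simp add: comp_id_right)

lemma mult_assoc: "opmat_mult n (opmat_mult n A B) C = opmat_mult n A (opmat_mult n B C)"
proof (intro ext)
  fix i j
  have "opmat_mult n (opmat_mult n A B) C i j = (\<Sum>k<n. \<Sum>l<n. A i l o\<^sub>L B l k o\<^sub>L C k j)"
    unfolding opmat_mult_def by (simp add: bounded_bilinear.sum_left[OF bounded_bilinear_blinfun_compose])
  also have "\<dots> = (\<Sum>l<n. \<Sum>k<n. A i l o\<^sub>L B l k o\<^sub>L C k j)" by (rule sum.swap)
  also have "\<dots> = opmat_mult n A (opmat_mult n B C) i j"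
    unfolding opmat_mult_def by (simp add: bounded_bilinear.sum_right[OF bounded_bilinear_blinfun_compose] comp_assoc)
  finally show "opmat_mult n (opmat_mult n A B) C i j = opmat_mult n A (opmat_mult n B C) i j" .
qed

lemma mult_id_left: "opmat_eq n (opmat_mult n opmat_id A) A"
  unfolding opmat_eq_def opmat_mult_def opmat_id_def
  by (simp add: id_if_left)

lemma mult_id_right: "opmat_eq n (opmat_mult n A opmat_id) A"
  unfolding opmat_eq_def opmat_mult_def opmat_id_def
  by (simp add: id_if_right)

lemma mult_cong_left: "opmat_eq n A A' \<Longrightarrow> opmat_eq n (opmat_mult n A B) (opmat_mult n A' B)"
  unfolding opmat_eq_def opmat_mult_def by (auto intro!: sum.cong)

lemma mult_cong_right: "opmat_eq n B B' \<Longrightarrow> opmat_eq n (opmat_mult n A B) (opmat_mult n A B')"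
  unfolding opmat_eq_def opmat_mult_def by (auto intro!: sum.cong)

lemma adj_mult: "opmat_adj (opmat_mult n A B) = opmat_mult n (opmat_adj B) (opmat_adj (A :: 'a::{real_inner,complete_space} opmat))"
  unfolding opmat_adj_def opmat_mult_def by (intro ext) (simp add: adj_sum adj_comp)

lemma adj_cong: "opmat_eq n A B \<Longrightarrow> opmat_eq n (opmat_adj A) (opmat_adj (B :: 'a::{real_inner,complete_space} opmat))"
  unfolding opmat_eq_def opmat_adj_def by auto

lemma adj_opmat_id: "opmat_adj opmat_id = (opmat_id :: 'a::{real_inner,complete_space} opmat)"
  unfolding opmat_adj_def opmat_id_def by (intro ext) (auto simp: adj_id adj_zero)

lemma lower_mult:
  assumes "lower_triangular n A" "lower_triangular n B"
  shows "lower_triangular n (opmat_mult n A B)"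
  unfolding lower_triangular_def opmat_mult_def
proof (intro allI impI)
  fix i j assume ij: "i < n" "j < n" "i < j"
  have "A i k o\<^sub>L B k j = 0" if "k < n" for k
  proof (cases "i < k")
    case True then show ?thesis using assms(1) ij that by (simp add: lower_triangular_def)
  next
    case False then have "k < j" using ij by simp
    then show ?thesis using assms(2) ij that by (simp add: lower_triangular_def)
  qed
  then show "(\<Sum>k<n. A i k o\<^sub>L B k j) = 0" by simp
qed

lemma diag_mult:
  assumes "lower_triangular n A" "lower_triangular n B" "i < n"
  shows "opmat_mult n A B i i = A i i o\<^sub>L B i i"
proof -
  have "A i k o\<^sub>L B k i = (if k = i then A i i o\<^sub>L B i i else 0)" if "k < n" for k
  proof (cases "k = i")
    case False
    show ?thesis
    proof (cases "i < k")
      case True then show ?thesis using assms that by (simp add: lower_triangular_def)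
    next
      case f: False then have "k < i" using False by simp
      then show ?thesis using assms that by (simp add: lower_triangular_def)
    qed
  qed simp
  then have "opmat_mult n A B i i = (\<Sum>k<n. if k = i then A i i o\<^sub>L B i i else 0)"
    unfolding opmat_mult_def by (intro sum.cong) auto
  also have "\<dots> = A i i o\<^sub>L B i i" using assms(3) by simp
  finally show ?thesis .
qed

lemma diag_diag_mult:
  assumes "i < n"
  shows "opmat_mult n (opmat_diag A) (opmat_diag B) i j = (if i = j then A i i o\<^sub>L B i i else 0)"
proof -
  have "opmat_mult n (opmat_diag A) (opmat_diag B) i j
      = (\<Sum>k<n. if k = i then (if i = j then A i i o\<^sub>L B i i else 0) else 0)"
    unfolding opmat_mult_def opmat_diag_def by (intro sum.cong) auto
  also have "\<dots> = (if i = j then A i i o\<^sub>L B i i else 0)" using assms by simp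
  finally show ?thesis .
qed


theorem lemma4:
  fixes L1 L2 :: "'a::{real_inner,complete_space} opmat" and n :: nat
  assumes "invertible_lower_triangular n L1"
    and "invertible_lower_triangular n L2"
    and "opmat_eq n (opmat_mult n L1 (opmat_adj L1)) (opmat_mult n L2 (opmat_adj L2))"
  shows "\<exists>D. opmat_inverse n (opmat_diag L1) D \<and>
           opmat_eq n L2 (opmat_mult n (opmat_mult n L1 D) (opmat_diag L2))"
proof -
  have lL1: "lower_triangular n L1" and lL2: "lower_triangular n L2"
    using assms(1,2) by (auto simp: invertible_lower_triangular_def)
  obtain M1 where lM1: "lower_triangular n M1" and iM1: "opmat_inverse n L1 M1"
    using assms(1) by (auto simp: invertible_lower_triangular_def)
  obtain M2 where lM2: "lower_triangular n M2" and iM2: "opmat_inverse n L2 M2"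
    using assms(2) by (auto simp: invertible_lower_triangular_def)
  have L1M1: "opmat_eq n (opmat_mult n L1 M1) opmat_id" and M1L1: "opmat_eq n (opmat_mult n M1 L1) opmat_id"
    using iM1 by (auto simp: opmat_inverse_def)
  have L2M2: "opmat_eq n (opmat_mult n L2 M2) opmat_id" and M2L2: "opmat_eq n (opmat_mult n M2 L2) opmat_id"
    using iM2 by (auto simp: opmat_inverse_def)
  define U where "U = opmat_mult n M1 L2"
  define V where "V = opmat_mult n M2 L1"
  have lU: "lower_triangular n U" unfolding U_def using lM1 lL2 by (rule lower_mult)
  have lV: "lower_triangular n V" unfolding V_def using lM2 lL1 by (rule lower_mult)
  have VU: "opmat_eq n (opmat_mult n V U) opmat_id"
  proof -
    have "opmat_mult n V U = opmat_mult n M2 (opmat_mult n (opmat_mult n L1 M1) L2)"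
      unfolding U_def V_def by (simp add: mult_assoc)
    also have "opmat_eq n \<dots> (opmat_mult n M2 (opmat_mult n opmat_id L2))"
      by (intro mult_cong_right mult_cong_left L1M1)
    also have "opmat_eq n \<dots> (opmat_mult n M2 L2)"
      by (intro mult_cong_right mult_id_left)
    also have "opmat_eq n \<dots> opmat_id" by (rule M2L2)
    finally show ?thesis .
  qed
  have UUs: "opmat_eq n (opmat_mult n U (opmat_adj U)) opmat_id"
  proof -
    have "opmat_mult n U (opmat_adj U) = opmat_mult n M1 (opmat_mult n (opmat_mult n L2 (opmat_adj L2)) (opmat_adj M1))"
      unfolding U_def by (simp add: mult_assoc adj_mult)
    also have "opmat_eq n \<dots> (opmat_mult n M1 (opmat_mult n (opmat_mult n L1 (opmat_adj L1)) (opmat_adj M1)))"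
      by (intro mult_cong_right mult_cong_left opmat_eq_sym[OF assms(3)])
    also have "\<dots> = opmat_mult n (opmat_mult n M1 L1) (opmat_adj (opmat_mult n M1 L1))"
      by (simp add: mult_assoc adj_mult)
    also have "opmat_eq n \<dots> (opmat_mult n opmat_id (opmat_adj (opmat_mult n M1 L1)))"
      by (intro mult_cong_left M1L1)
    also have "opmat_eq n \<dots> (opmat_mult n opmat_id (opmat_adj opmat_id))"
      by (intro mult_cong_right adj_cong M1L1)
    also have "opmat_eq n \<dots> opmat_id"
      unfolding adj_opmat_id by (rule mult_id_left)
    finally show ?thesis .
  qed
  have UsV: "opmat_eq n (opmat_adj U) V"
  proof -
    have "opmat_eq n (opmat_adj U) (opmat_mult n opmat_id (opmat_adj U))"
      by (rule opmat_eq_sym[OF mult_id_left])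
    also have "opmat_eq n \<dots> (opmat_mult n (opmat_mult n V U) (opmat_adj U))"
      by (intro mult_cong_left opmat_eq_sym[OF VU])
    also have "\<dots> = opmat_mult n V (opmat_mult n U (opmat_adj U))" by (simp add: mult_assoc)
    also have "opmat_eq n \<dots> (opmat_mult n V opmat_id)"
      by (intro mult_cong_right UUs)
    also have "opmat_eq n \<dots> V" by (rule mult_id_right)
    finally show ?thesis .
  qed
  define D where "D = opmat_diag M1"
  have Udiag: "opmat_eq n U (opmat_mult n D (opmat_diag L2))"
    unfolding opmat_eq_def
  proof (intro allI impI)
    fix i j assume ij: "i < n" "j < n"
    show "U i j = opmat_mult n D (opmat_diag L2) i j"
    proof (cases "i = j")
      case True
      then show ?thesis unfolding D_def U_def
        using diag_mult[OF lM1 lL2 ij(1)] diag_diag_mult[OF ij(1), of M1 L2 i] by simp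
    next
      case False
      have "U i j = 0"
      proof (cases "i < j")
        case True then show ?thesis using lU ij by (simp add: lower_triangular_def)
      next
        case f: False
        then have "j < i" using False by simp
        then have "V j i = 0" using lV ij by (simp add: lower_triangular_def)
        then have "adj (U i j) = 0" using UsV ij by (simp add: opmat_eq_def opmat_adj_def)
        then show ?thesis by (rule adj_eq0)
      qed
      then show ?thesis using diag_diag_mult[OF ij(1), of M1 L2 j] False by (simp add: D_def)
    qed
  qed
  have inv: "opmat_inverse n (opmat_diag L1) D"
  proof -
    have a: "L1 i i o\<^sub>L M1 i i = id_blinfun" if "i < n" for i
      using diag_mult[OF lL1 lM1 that] L1M1 that by (simp add: opmat_eq_def opmat_id_def)
    have b: "M1 i i o\<^sub>L L1 i i = id_blinfun" if "i < n" for i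
      using diag_mult[OF lM1 lL1 that] M1L1 that by (simp add: opmat_eq_def opmat_id_def)
    show ?thesis unfolding opmat_inverse_def opmat_eq_def D_def
      using a b by (simp add: diag_diag_mult opmat_id_def)
  qed
  have "opmat_eq n L2 (opmat_mult n opmat_id L2)" by (rule opmat_eq_sym[OF mult_id_left])
  also have "opmat_eq n \<dots> (opmat_mult n (opmat_mult n L1 M1) L2)"
    by (intro mult_cong_left opmat_eq_sym[OF L1M1])
  also have "\<dots> = opmat_mult n L1 U" by (simp add: U_def mult_assoc)
  also have "opmat_eq n \<dots> (opmat_mult n L1 (opmat_mult n D (opmat_diag L2)))"
    by (intro mult_cong_right Udiag)
  also have "\<dots> = opmat_mult n (opmat_mult n L1 D) (opmat_diag L2)" by (simp add: mult_assoc)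
  finally show ?thesis using inv by blast
qed

end
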